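(* Let $D\ge 3$ and let $G$ be an $n$-vertex graph satisfying properties (C1) and (C3). Let $H=\mathrm{Co}_2(G)$. Then: (i) if $v\in V(H)$, then $\deg_H(v)\ge \deg_G(v)-2$; (ii) if $v\in V(H)\cap S_G(D)$, then $\deg_H(v)\ge\deg_G(v)-1$; (iii) if $\deg_G(v)\ge 3$, then $v\in V(H)$.
   Context: $S_G(D)$ is the set of vertices of $G$ of degree at most $D$. $\mathrm{Co}_2(G)$ is the unique maximal subgraph of $G$ with minimum degree at least $2$. Property (C1): for every set $R\subseteq V(G)$ with $|R|\le 100$ such that $G[R]$ is connected, $|R\cap S_G(D)|\le 2$. Property (C3): $G$ has no connected component with $k$ vertices for any $k\in[3,n/2]$. *)

theory Defs
  imports Main
begin

definition simple_graph :: "'a set \<Rightarrow> ('a \<Rightarrow> 'a \<Rightarrow> bool) \<Rightarrow> bool" where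
  "simple_graph V E \<longleftrightarrow> finite V \<and> (\<forall>u v. E u v \<longrightarrow> E v u)
     \<and> (\<forall>v. \<not> E v v) \<and> (\<forall>u v. E u v \<longrightarrow> u \<in> V \<and> v \<in> V)"

definition deg :: "('a \<Rightarrow> 'a \<Rightarrow> bool) \<Rightarrow> 'a set \<Rightarrow> 'a \<Rightarrow> nat" where
  "deg E A v = card {u \<in> A. E v u}"

definition low_deg :: "'a set \<Rightarrow> ('a \<Rightarrow> 'a \<Rightarrow> bool) \<Rightarrow> nat \<Rightarrow> 'a set" where
  "low_deg V E D = {v \<in> V. deg E V v \<le> D}"

definition connected_set :: "('a \<Rightarrow> 'a \<Rightarrow> bool) \<Rightarrow> 'a set \<Rightarrow> bool" where
  "connected_set E R \<longleftrightarrow>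
     (\<forall>x\<in>R. \<forall>y\<in>R. (x, y) \<in> {(a, b). a \<in> R \<and> b \<in> R \<and> E a b}\<^sup>*)"

definition component :: "'a set \<Rightarrow> ('a \<Rightarrow> 'a \<Rightarrow> bool) \<Rightarrow> 'a set \<Rightarrow> bool" where
  "component V E C \<longleftrightarrow> C \<noteq> {} \<and> C \<subseteq> V \<and> connected_set E C
     \<and> (\<forall>u\<in>C. \<forall>w. E u w \<longrightarrow> w \<in> C)"

text \<open>Vertex set of Co_2(G), the unique maximal subgraph of minimum degree
at least 2: the union of all vertex sets W inducing min degree \<ge> 2
(Co_2(G) is the subgraph induced on this set).\<close>
definition core2 :: "'a set \<Rightarrow> ('a \<Rightarrow> 'a \<Rightarrow> bool) \<Rightarrow> 'a set" where
  "core2 V E = \<Union>{W. W \<subseteq> V \<and> (\<forall>v\<in>W. deg E W v \<ge> 2)}"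

definition prop_C1 :: "'a set \<Rightarrow> ('a \<Rightarrow> 'a \<Rightarrow> bool) \<Rightarrow> nat \<Rightarrow> bool" where
  "prop_C1 V E D \<longleftrightarrow> (\<forall>R. R \<subseteq> V \<and> card R \<le> 100 \<and> connected_set E R
      \<longrightarrow> card (R \<inter> low_deg V E D) \<le> 2)"

definition prop_C3 :: "'a set \<Rightarrow> ('a \<Rightarrow> 'a \<Rightarrow> bool) \<Rightarrow> bool" where
  "prop_C3 V E \<longleftrightarrow> (\<forall>C. component V E C \<longrightarrow>
      \<not> (3 \<le> card C \<and> 2 * card C \<le> card V))"

end

theory Submission
  imports Defs
begin

lemma star_connected:
  assumes sym: "\<forall>u v. E u v \<longrightarrow> E v u" and L: "\<forall>l\<in>L. E y l"
  shows "connected_set E (insert y L)"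
  unfolding connected_set_def
proof (intro ballI)
  fix x z assume x: "x \<in> insert y L" and z: "z \<in> insert y L"
  let ?r = "{(a, b). a \<in> insert y L \<and> b \<in> insert y L \<and> E a b}"
  have xy: "(x, y) \<in> ?r\<^sup>*" using x L sym by (cases "x = y") auto
  have yz: "(y, z) \<in> ?r\<^sup>*" using z L by (cases "z = y") auto
  show "(x, z) \<in> ?r\<^sup>*" using xy yz by (rule rtrancl_trans)
qed

lemma deg_mono:
  assumes "finite B" "A \<subseteq> B" shows "deg E A v \<le> deg E B v"
  unfolding deg_def using assms by (intro card_mono) auto

lemma deg_split:
  assumes "finite V" and inV: "\<forall>u. E v u \<longrightarrow> u \<in> V"
  shows "deg E V v \<le> deg E A v + card {u \<in> V - A. E v u}"
proof -
  have "{u \<in> V. E v u} \<subseteq> {u \<in> A. E v u} \<union> {u \<in> V - A. E v u}" by auto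
  hence "deg E V v \<le> card ({u \<in> A. E v u} \<union> {u \<in> V - A. E v u})"
    unfolding deg_def using assms by (intro card_mono) (auto intro: finite_subset)
  also have "\<dots> \<le> deg E A v + card {u \<in> V - A. E v u}"
    unfolding deg_def by (rule card_Un_le)
  finally show ?thesis .
qed

lemma star_bound:
  assumes G: "simple_graph V E" and C1: "prop_C1 V E D"
    and v: "v \<in> V" and L: "L \<subseteq> {u \<in> low_deg V E D. E v u}"
  shows "card L \<le> 2 \<and> (v \<in> low_deg V E D \<longrightarrow> card L \<le> 1)"
proof -
  have fin: "finite V" and sym: "\<forall>u v. E u v \<longrightarrow> E v u" and irr: "\<forall>v. \<not> E v v"
    and inV: "\<forall>u v. E u v \<longrightarrow> u \<in> V \<and> v \<in> V"
    using G unfolding simple_graph_def by auto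
  have lowV: "low_deg V E D \<subseteq> V" unfolding low_deg_def by auto
  have "L \<subseteq> V" using L lowV by blast
  hence finL: "finite L" using fin finite_subset by blast
  have vL: "v \<notin> L" using L irr by auto
  have key: "False" if L': "L' \<subseteq> L" "card L' = k" "k + (if v \<in> low_deg V E D then 1 else 0) \<ge> 3" "k \<le> 3" for L' k
  proof -
    have finL': "finite L'" using L' finL finite_subset by blast
    let ?R = "insert v L'"
    have Rsub: "?R \<subseteq> V" using v L L' lowV by auto
    have cR: "card ?R \<le> 100" using finL' L' by (simp add: card_insert_if)
    have conn: "connected_set E ?R" using sym L L' by (intro star_connected) auto
    have "card (?R \<inter> low_deg V E D) \<le> 2" using C1 Rsub cR conn unfolding prop_C1_def by blast
    moreover have "card (?R \<inter> low_deg V E D) \<ge> 3"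
    proof (cases "v \<in> low_deg V E D")
      case True
      hence "?R \<inter> low_deg V E D = ?R" using L L' by auto
      moreover have "v \<notin> L'" using vL L' by auto
      hence "card ?R = k + 1" using finL' L' by simp
      ultimately show ?thesis using True L' by simp
    next
      case False
      have "L' \<subseteq> ?R \<inter> low_deg V E D" using L L' by auto
      hence "card L' \<le> card (?R \<inter> low_deg V E D)" using finL' by (intro card_mono) auto
      thus ?thesis using False L' by simp
    qed
    ultimately show False by simp
  qed
  show ?thesis
  proof (rule ccontr)
    assume "\<not> ?thesis"
    then consider "card L \<ge> 3" | "v \<in> low_deg V E D" "card L \<ge> 2" by linarith
    thus False
    proof cases
      case 1
      then obtain L' where "L' \<subseteq> L" "card L' = 3" using obtain_subset_with_card_n by metis
      thus False using key[of L' 3] by simp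
    next
      case 2
      then obtain L' where "L' \<subseteq> L" "card L' = 2" using obtain_subset_with_card_n by metis
      thus False using key[of L' 2] 2 by simp
    qed
  qed
qed

lemma core_deg:
  assumes fin: "finite V" and v: "v \<in> core2 V E" shows "deg E (core2 V E) v \<ge> 2"
proof -
  obtain W where W: "W \<subseteq> V" "\<forall>v\<in>W. deg E W v \<ge> 2" "v \<in> W"
    using v unfolding core2_def by auto
  have "W \<subseteq> core2 V E" using W unfolding core2_def by blast
  moreover have "core2 V E \<subseteq> V" unfolding core2_def by auto
  ultimately have "deg E W v \<le> deg E (core2 V E) v"
    using fin by (intro deg_mono) (auto intro: finite_subset)
  moreover have "deg E W v \<ge> 2" using W(2) W(3) by blast
  ultimately show ?thesis by linarith
qed

lemma core_max:
  assumes "W \<subseteq> V" "\<forall>v\<in>W. deg E W v \<ge> 2" shows "W \<subseteq> core2 V E"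
  using assms unfolding core2_def by blast

lemma peel:
  assumes fin: "finite V" and Y: "Y \<subseteq> V - core2 V E" "Y \<noteq> {}"
  shows "\<exists>y\<in>Y. deg E (core2 V E \<union> Y) y \<le> 1"
proof (rule ccontr)
  let ?K = "core2 V E"
  assume "\<not> ?thesis"
  hence h: "\<forall>y\<in>Y. deg E (?K \<union> Y) y \<ge> 2" by auto
  have KV: "?K \<subseteq> V" unfolding core2_def by auto
  have "\<forall>v\<in>?K \<union> Y. deg E (?K \<union> Y) v \<ge> 2"
  proof
    fix v assume "v \<in> ?K \<union> Y"
    thus "deg E (?K \<union> Y) v \<ge> 2"
    proof
      assume vK: "v \<in> ?K"
      have "deg E ?K v \<le> deg E (?K \<union> Y) v"
        using fin KV Y by (intro deg_mono) (auto intro: finite_subset)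
      thus ?thesis using core_deg[OF fin vK] by simp
    qed (use h in auto)
  qed
  hence "?K \<union> Y \<subseteq> ?K" using KV Y by (intro core_max) auto
  thus False using Y by auto
qed

lemma outside_deg:
  assumes G: "simple_graph V E" and D: "D \<ge> 3" and C1: "prop_C1 V E D"
  shows "\<forall>x \<in> V - core2 V E. deg E V x \<le> 2"
proof -
  let ?K = "core2 V E" and ?X = "V - core2 V E"
  have fin: "finite V" and irr: "\<forall>v. \<not> E v v" and inV: "\<forall>u v. E u v \<longrightarrow> u \<in> V \<and> v \<in> V"
    using G unfolding simple_graph_def by auto
  have KV: "?K \<subseteq> V" unfolding core2_def by auto
  have main: "\<And>Y. Y \<subseteq> ?X \<Longrightarrow> (\<forall>x\<in>?X - Y. deg E V x \<le> 2) \<Longrightarrow> (\<forall>x\<in>?X. deg E V x \<le> 2)"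
  proof -
    fix Y :: "'a set"
    show "Y \<subseteq> ?X \<Longrightarrow> (\<forall>x\<in>?X - Y. deg E V x \<le> 2) \<Longrightarrow> (\<forall>x\<in>?X. deg E V x \<le> 2)"
    proof (induction "card Y" arbitrary: Y rule: less_induct)
      case (less Y)
      show ?case
      proof (cases "Y = {}")
        case True thus ?thesis using less by auto
      next
        case False
        then obtain y where y: "y \<in> Y" "deg E (?K \<union> Y) y \<le> 1"
          using peel[OF fin less(2)] by auto
        have finY: "finite Y" using less(2) fin finite_subset by blast
        have yV: "y \<in> V" using y less(2) by auto
        have dy: "deg E V y \<le> 2"
        proof -
          let ?N = "{u \<in> V - (?K \<union> Y). E y u}"
          have "?N \<subseteq> {u \<in> low_deg V E D. E y u}"
          proof
            fix u assume u: "u \<in> ?N"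
            hence "deg E V u \<le> 2" using less(3) by auto
            thus "u \<in> {u \<in> low_deg V E D. E y u}" using u D unfolding low_deg_def by auto
          qed
          hence sb: "card ?N \<le> 2 \<and> (y \<in> low_deg V E D \<longrightarrow> card ?N \<le> 1)"
            using star_bound[OF G C1 yV] by blast
          have split: "deg E V y \<le> deg E (?K \<union> Y) y + card ?N"
            using deg_split[OF fin] inV by blast
          show ?thesis
          proof (cases "y \<in> low_deg V E D")
            case True thus ?thesis using sb split y by linarith
          next
            case False
            hence "deg E V y > D" using yV unfolding low_deg_def by auto
            thus ?thesis using sb split y D by linarith
          qed
        qed
        have "card (Y - {y}) < card Y" by (rule card_Diff1_less[OF finY y(1)])
        moreover have "Y - {y} \<subseteq> ?X" using less(2) by auto
        moreover have "\<forall>x\<in>?X - (Y - {y}). deg E V x \<le> 2" using less(3) dy by auto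
        ultimately show ?thesis using less(1) by blast
      qed
    qed
  qed
  show ?thesis using main[of ?X] by auto
qed

theorem lemma5p1:
  fixes V :: "'a set" and E :: "'a \<Rightarrow> 'a \<Rightarrow> bool" and D :: nat
  assumes "simple_graph V E" and "D \<ge> 3"
    and "prop_C1 V E D" and "prop_C3 V E"
  shows "(\<forall>v \<in> core2 V E. deg E (core2 V E) v + 2 \<ge> deg E V v)
       \<and> (\<forall>v \<in> core2 V E \<inter> low_deg V E D. deg E (core2 V E) v + 1 \<ge> deg E V v)
       \<and> (\<forall>v \<in> V. deg E V v \<ge> 3 \<longrightarrow> v \<in> core2 V E)"
proof -
  let ?K = "core2 V E"
  have G: "simple_graph V E" and C1: "prop_C1 V E D" using assms by auto
  have fin: "finite V" and inV: "\<forall>u v. E u v \<longrightarrow> u \<in> V \<and> v \<in> V" using G unfolding simple_graph_def by auto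
  have KV: "?K \<subseteq> V" unfolding core2_def by auto
  have od: "\<forall>x \<in> V - ?K. deg E V x \<le> 2" using outside_deg assms by blast
  have NB: "card {u \<in> V - ?K. E v u} \<le> 2 \<and> (v \<in> low_deg V E D \<longrightarrow> card {u \<in> V - ?K. E v u} \<le> 1)"
    if "v \<in> V" for v
  proof -
    have "{u \<in> V - ?K. E v u} \<subseteq> {u \<in> low_deg V E D. E v u}"
    proof
      fix u assume u: "u \<in> {u \<in> V - ?K. E v u}"
      hence "deg E V u \<le> 2" using od by auto
      thus "u \<in> {u \<in> low_deg V E D. E v u}" using u assms(2) unfolding low_deg_def by auto
    qed
    thus ?thesis using star_bound[OF G C1 that] by blast
  qed
  have sp: "deg E V v \<le> deg E ?K v + card {u \<in> V - ?K. E v u}" for v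
    using deg_split[OF fin] inV by blast
  show ?thesis
  proof (intro conjI ballI impI)
    fix v assume "v \<in> ?K"
    thus "deg E ?K v + 2 \<ge> deg E V v" using NB[of v] sp[of v] KV by fastforce
  next
    fix v assume v: "v \<in> ?K \<inter> low_deg V E D"
    thus "deg E ?K v + 1 \<ge> deg E V v" using NB[of v] sp[of v] KV by fastforce
  next
    fix v assume v: "v \<in> V" "deg E V v \<ge> 3"
    show "v \<in> ?K"
    proof (rule ccontr)
      assume "v \<notin> ?K"
      hence "deg E V v \<le> 2" using od v by blast
      thus False using v by linarith
    qed
  qed
qed

end
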